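(* Let $\mathcal{X} \subseteq \mathbb{R}^n$ and let $d$ be a distance (metric) on $\mathcal{X}$. Let $\mathcal{P} = \{(x_i, y_i)\}_{i=1}^N$ be a finite labeled training set with $x_i \in \mathcal{X}$, which is linearly separable, and let $L$ be the max-margin linear classifier trained on $\mathcal{P}$. Let $\epsilon > 0$ and suppose that for any two data points $x_i, x_j$ of $\mathcal{P}$, $d(x_i, x_j) > 2\epsilon$ whenever $y_i \neq y_j$. Let $b$ be the nearest-neighbor binarizer $b(x) \in \arg\min_{z \in \mathcal{P}} d(x,z)$ (where $z$ ranges over the data points $x_1,\dots,x_N$), and define the augmented classifier $C(x) = L(b(x))$. Then $C$ is robust over $\mathcal{P}$ with respect to $\epsilon$, and $C$ is exact on the $\epsilon$-neighborhoods of the points of $\mathcal{P}$, i.e. for every $i$ and every $z \in B(x_i,\epsilon)$, $C(z) = y_i$.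
   Context: For $x \in \mathcal{X}$ and $\epsilon>0$, $B(x,\epsilon) = \{z \in \mathcal{X} : d(x,z) \le \epsilon\}$. A function $F$ defined on $\mathcal{X}$ is robust over a subset $\mathcal{Q} \subseteq \mathcal{X}$ with respect to $\epsilon>0$ if for all $x \in \mathcal{Q}$ and all $z \in B(x,\epsilon)$, $F(z) = F(x)$. "Exact" means no classification errors. *)

theory Defs
  imports "HOL-Analysis.Analysis"
begin

definition linearly_separable :: "(nat \<Rightarrow> 'a::euclidean_space) \<Rightarrow> (nat \<Rightarrow> real) \<Rightarrow> nat \<Rightarrow> bool" where
  "linearly_separable x y N \<longleftrightarrow> (\<exists>w c. \<forall>i<N. y i * (inner w (x i) + c) > 0)"

definition svm_feasible :: "(nat \<Rightarrow> 'a::euclidean_space) \<Rightarrow> (nat \<Rightarrow> real) \<Rightarrow> nat \<Rightarrow> 'a \<Rightarrow> real \<Rightarrow> bool" where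
  "svm_feasible x y N w c \<longleftrightarrow> (\<forall>i<N. y i * (inner w (x i) + c) \<ge> 1)"

definition max_margin_classifier :: "(nat \<Rightarrow> 'a::euclidean_space) \<Rightarrow> (nat \<Rightarrow> real) \<Rightarrow> nat \<Rightarrow> ('a \<Rightarrow> real) \<Rightarrow> bool" where
  "max_margin_classifier x y N L \<longleftrightarrow>
     (\<exists>w c. svm_feasible x y N w c \<and>
            (\<forall>w' c'. svm_feasible x y N w' c' \<longrightarrow> norm w \<le> norm w') \<and>
            L = (\<lambda>v. sgn (inner w v + c)))"

definition nn_binarizer :: "'a set \<Rightarrow> ('a \<Rightarrow> 'a \<Rightarrow> real) \<Rightarrow> (nat \<Rightarrow> 'a) \<Rightarrow> nat \<Rightarrow> ('a \<Rightarrow> 'a) \<Rightarrow> bool" where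
  "nn_binarizer X d x N b \<longleftrightarrow>
     (\<forall>v\<in>X. (\<exists>i<N. b v = x i) \<and> (\<forall>j<N. d v (b v) \<le> d v (x j)))"

definition robust_over :: "'a set \<Rightarrow> ('a \<Rightarrow> 'a \<Rightarrow> real) \<Rightarrow> ('a \<Rightarrow> 'b) \<Rightarrow> 'a set \<Rightarrow> real \<Rightarrow> bool" where
  "robust_over X d F Q e \<longleftrightarrow> (\<forall>q\<in>Q. \<forall>z\<in>Metric_space.mcball X d q e. F z = F q)"

end

theory Submission
  imports Defs
begin

theorem theorem1:
  fixes X :: "(real ^ 'n) set" and d :: "real ^ 'n \<Rightarrow> real ^ 'n \<Rightarrow> real"
    and x :: "nat \<Rightarrow> real ^ 'n" and y :: "nat \<Rightarrow> real" and N :: nat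
    and L :: "real ^ 'n \<Rightarrow> real" and b :: "real ^ 'n \<Rightarrow> real ^ 'n" and \<epsilon> :: real
  assumes "Metric_space X d"
    and "\<forall>i<N. x i \<in> X"
    and "\<forall>i<N. y i \<in> {-1, 1}"
    and "linearly_separable x y N"
    and "max_margin_classifier x y N L"
    and "\<epsilon> > 0"
    and "\<forall>i<N. \<forall>j<N. y i \<noteq> y j \<longrightarrow> d (x i) (x j) > 2 * \<epsilon>"
    and "nn_binarizer X d x N b"
  shows "robust_over X d (\<lambda>v. L (b v)) (x ` {..<N}) \<epsilon>
    \<and> (\<forall>i<N. \<forall>z\<in>Metric_space.mcball X d (x i) \<epsilon>. L (b z) = y i)"
proof -
  interpret M: Metric_space X d by fact
  obtain w c where feas: "svm_feasible x y N w c" and Ld: "L = (\<lambda>v. sgn (inner w v + c))"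
    using assms(5) unfolding max_margin_classifier_def by blast
  have Lx: "L (x j) = y j" if "j < N" for j
  proof -
    have "y j * (inner w (x j) + c) \<ge> 1" using feas that unfolding svm_feasible_def by blast
    moreover have "y j = -1 \<or> y j = 1" using assms(3) that by auto
    ultimately show ?thesis unfolding Ld by (auto simp: sgn_if)
  qed
  have main: "L (b z) = y i" if i: "i < N" and z: "z \<in> M.mcball (x i) \<epsilon>" for i z
  proof -
    have zX: "z \<in> X" and dz: "d (x i) z \<le> \<epsilon>" using z by auto
    obtain j where j: "j < N" "b z = x j" and mn: "\<forall>k<N. d z (b z) \<le> d z (x k)"
      using assms(8) zX unfolding nn_binarizer_def by blast
    have xi: "x i \<in> X" and xj: "x j \<in> X" using assms(2) i j by auto
    have "d z (x j) \<le> d z (x i)" using mn i j by auto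
    also have "\<dots> = d (x i) z" using M.commute xi zX by simp
    finally have "d (x i) (x j) \<le> 2 * \<epsilon>"
      using M.triangle[OF xi zX xj] dz by linarith
    hence "y i = y j" using assms(7) i j by force
    thus ?thesis using Lx j by simp
  qed
  have "robust_over X d (\<lambda>v. L (b v)) (x ` {..<N}) \<epsilon>"
    unfolding robust_over_def
  proof (intro ballI)
    fix q z assume q: "q \<in> x ` {..<N}" and z: "z \<in> M.mcball q \<epsilon>"
    then obtain i where i: "i < N" and qi: "q = x i" by auto
    have "x i \<in> M.mcball (x i) \<epsilon>" using assms(2,6) i by auto
    thus "L (b z) = L (b q)" using main[OF i] z qi by auto
  qed
  thus ?thesis using main by blast
qed

end
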